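(* Let $X$ be a second countable locally compact Hausdorff space and $T\colon X\to X$ a continuous, locally injective map. Then the saturated critical set $G_\Lambda$ is meagre if and only if the critical point set $C=\{x\in X: T\text{ is not open at }x\}$ is meagre.
   Context: $T$ is open at $x$ if for every neighbourhood $U$ of $x$, $T(x)\in\mathrm{int}(T(U))$. The transfer operator with weight $1$ is $\Lambda(f)(x)=\sum_{y\in T^{-1}(x)}f(y)$ for $f\in C_c(X)$. The critical value set is $C_\Lambda=\{x\in X:\Lambda(f)\text{ is not continuous at }x\text{ for some }f\in C_c(X)\}$, the post-critical set is $P_\Lambda=\bigcup_{n\ge0}T^n(C_\Lambda)$, and the saturated critical set is $G_\Lambda=\bigcup_{k\ge0}T^{-k}(P_\Lambda)$ ($T$ is called sparsely critically saturated when $G_\Lambda$ is meagre). A set is meagre if it is a countable union of sets whose closures have empty interior. *)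

theory Defs
  imports "HOL-Analysis.Analysis"
begin

definition Cc :: "('a::topological_space \<Rightarrow> complex) set" where
  "Cc = {f. continuous_on UNIV f \<and> compact (closure {x. f x \<noteq> 0})}"

definition open_at :: "('a::topological_space \<Rightarrow> 'a) \<Rightarrow> 'a \<Rightarrow> bool" where
  "open_at T x \<longleftrightarrow> (\<forall>U. x \<in> interior U \<longrightarrow> T x \<in> interior (T ` U))"

definition locally_injective :: "('a::topological_space \<Rightarrow> 'a) \<Rightarrow> bool" where
  "locally_injective T \<longleftrightarrow> (\<forall>x. \<exists>U. open U \<and> x \<in> U \<and> inj_on T U)"

text \<open>Transfer operator with weight 1; the sum ranges over the preimages of x
  (terms with f y = 0 omitted, which does not change the value; for f in Cc and
  T locally injective this index set is finite).\<close>
definition transfer_op :: "('a \<Rightarrow> 'a) \<Rightarrow> ('a \<Rightarrow> complex) \<Rightarrow> 'a \<Rightarrow> complex" where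
  "transfer_op T f x = (\<Sum>y | T y = x \<and> f y \<noteq> 0. f y)"

definition critical_value_set :: "('a::topological_space \<Rightarrow> 'a) \<Rightarrow> 'a set" where
  "critical_value_set T = {x. \<exists>f\<in>Cc. \<not> (transfer_op T f \<longlongrightarrow> transfer_op T f x) (at x)}"

definition post_critical_set :: "('a::topological_space \<Rightarrow> 'a) \<Rightarrow> 'a set" where
  "post_critical_set T = (\<Union>n. (T ^^ n) ` critical_value_set T)"

definition saturated_critical_set :: "('a::topological_space \<Rightarrow> 'a) \<Rightarrow> 'a set" where
  "saturated_critical_set T = (\<Union>k. (T ^^ k) -` post_critical_set T)"

definition critical_point_set :: "('a::topological_space \<Rightarrow> 'a) \<Rightarrow> 'a set" where
  "critical_point_set T = {x. \<not> open_at T x}"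

definition nowhere_dense :: "'a::topological_space set \<Rightarrow> bool" where
  "nowhere_dense A \<longleftrightarrow> interior (closure A) = {}"

definition meagre :: "'a::topological_space set \<Rightarrow> bool" where
  "meagre A \<longleftrightarrow> (\<exists>F::nat \<Rightarrow> 'a set. (\<forall>n. nowhere_dense (F n)) \<and> A = (\<Union>n. F n))"

end

theory Submission
  imports Defs
begin


lemma nowhere_dense_mono: "A \<subseteq> B \<Longrightarrow> nowhere_dense B \<Longrightarrow> nowhere_dense A"
  unfolding nowhere_dense_def by (metis closure_mono interior_mono subset_empty)

lemma meagre_iff:
  "meagre A \<longleftrightarrow> (\<exists>\<F>. countable \<F> \<and> (\<forall>F\<in>\<F>. nowhere_dense F) \<and> A \<subseteq> \<Union>\<F>)"
proof
  assume "meagre A"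
  then obtain F :: "nat \<Rightarrow> _" where "\<forall>n. nowhere_dense (F n)" "A = (\<Union>n. F n)" unfolding meagre_def by blast
  then show "\<exists>\<F>. countable \<F> \<and> (\<forall>F\<in>\<F>. nowhere_dense F) \<and> A \<subseteq> \<Union>\<F>"
    by (intro exI[of _ "range F"]) auto
next
  assume "\<exists>\<F>. countable \<F> \<and> (\<forall>F\<in>\<F>. nowhere_dense F) \<and> A \<subseteq> \<Union>\<F>"
  then obtain \<F> where F: "countable \<F>" "\<forall>F\<in>\<F>. nowhere_dense F" "A \<subseteq> \<Union>\<F>" by blast
  define \<G> where "\<G> = insert {} ((\<lambda>F. F \<inter> A) ` \<F>)"
  have "countable \<G>" "\<G> \<noteq> {}" using F by (auto simp: \<G>_def)
  then have r: "range (from_nat_into \<G>) = \<G>" by (simp add: range_from_nat_into)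
  have nd: "nowhere_dense G" if "G \<in> \<G>" for G
  proof -
    from that have "G = {} \<or> (\<exists>F\<in>\<F>. G = F \<inter> A)" by (auto simp: \<G>_def)
    then show ?thesis
    proof
      assume "G = {}" then show ?thesis by (simp add: nowhere_dense_def)
    next
      assume "\<exists>F\<in>\<F>. G = F \<inter> A"
      then obtain F0 where "F0 \<in> \<F>" "G = F0 \<inter> A" by blast
      then show ?thesis using F(2) nowhere_dense_mono[of G F0] by blast
    qed
  qed
  have "A = \<Union>\<G>" using F(3) by (auto simp: \<G>_def)
  also have "\<dots> = (\<Union>n. from_nat_into \<G> n)" using r by simp
  finally have A: "A = (\<Union>n. from_nat_into \<G> n)" .
  have "\<forall>n. nowhere_dense (from_nat_into \<G> n)"
    using nd from_nat_into[OF \<open>\<G> \<noteq> {}\<close>] by blast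
  then show "meagre A" unfolding meagre_def using A by blast
qed

lemma meagre_subset:
  assumes "A \<subseteq> B" "meagre B" shows "meagre A"
proof -
  obtain \<F> where F: "countable \<F>" "\<forall>F\<in>\<F>. nowhere_dense F" "B \<subseteq> \<Union>\<F>"
    using assms(2) unfolding meagre_iff by blast
  show ?thesis unfolding meagre_iff
    by (rule exI[of _ \<F>]) (use F assms(1) in blast)
qed

lemma meagre_UN:
  assumes "countable I" "\<And>i. i \<in> I \<Longrightarrow> meagre (A i)"
  shows "meagre (\<Union>i\<in>I. A i)"
proof -
  from assms(2) have "\<forall>i\<in>I. \<exists>\<F>. countable \<F> \<and> (\<forall>F\<in>\<F>. nowhere_dense F) \<and> A i \<subseteq> \<Union>\<F>"
    by (simp add: meagre_iff[symmetric])
  then obtain \<F> where F0: "\<forall>i\<in>I. countable (\<F> i) \<and> (\<forall>F\<in>\<F> i. nowhere_dense F) \<and> A i \<subseteq> \<Union>(\<F> i)"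
    by (rule bchoice[THEN exE]) blast
  then have F: "\<And>i. i\<in>I \<Longrightarrow> countable (\<F> i) \<and> (\<forall>F\<in>\<F> i. nowhere_dense F) \<and> A i \<subseteq> \<Union>(\<F> i)"
    by blast
  show ?thesis unfolding meagre_iff
  proof (intro exI conjI)
    show "countable (\<Union>i\<in>I. \<F> i)" using F assms(1) by (simp add: countable_UN)
    show "\<forall>F\<in>(\<Union>i\<in>I. \<F> i). nowhere_dense F" using F by blast
    show "(\<Union>i\<in>I. A i) \<subseteq> \<Union>(\<Union>i\<in>I. \<F> i)"
    proof
      fix x assume "x \<in> (\<Union>i\<in>I. A i)"
      then obtain i where i: "i \<in> I" "x \<in> A i" by blast
      then obtain G where "G \<in> \<F> i" "x \<in> G" using F[OF i(1)] by blast
      then show "x \<in> \<Union>(\<Union>i\<in>I. \<F> i)" using i(1) by blast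
    qed
  qed
qed

lemma Hausdorff_euclidean_t2: "Hausdorff_space (euclidean :: 'a::t2_space topology)"
  unfolding Hausdorff_space_def disjnt_def by (simp add: separation_t2)

lemma bump:
  fixes x :: "'a::t2_space"
  assumes lc: "locally_compact_space (euclidean :: 'a topology)" and "open V" "x \<in> V"
  obtains f where "f \<in> Cc" "f x = 1" "\<And>y. f y \<noteq> 0 \<Longrightarrow> y \<in> V"
proof -
  have reg: "regular_space (euclidean :: 'a topology)"
    using lc Hausdorff_euclidean_t2 locally_compact_Hausdorff_imp_regular_space by blast
  then have "neighbourhood_base_of (\<lambda>C. compactin euclidean C \<and> closedin euclidean C) (euclidean :: 'a topology)"
    using lc locally_compact_regular_space_neighbourhood_base by blast
  then have "\<exists>U W. openin euclidean U \<and> (compactin euclidean W \<and> closedin euclidean W) \<and> x \<in> U \<and> U \<subseteq> W \<and> W \<subseteq> V"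
    unfolding neighbourhood_base_of using assms(2,3) by simp
  then obtain N M where NM: "open N" "compact M" "closed M" "x \<in> N" "N \<subseteq> M" "M \<subseteq> V"
    by (auto simp flip: closed_closedin)
  have "completely_regular_space (euclidean :: 'a topology)"
    using lc reg locally_compact_regular_imp_completely_regular_space by blast
  then obtain g :: "'a \<Rightarrow> real" where g: "continuous_map euclidean (top_of_set {0..1}) g" "g x = 0" "g ` (- N) \<subseteq> {1}"
  proof -
    have "closedin euclidean (- N)" using NM(1) by (simp add: closed_closedin[symmetric] open_closed[symmetric])
    moreover have "x \<in> topspace euclidean - (- N)" using NM(4) by simp
    ultimately have "\<exists>g::'a\<Rightarrow>real. continuous_map euclidean (top_of_set {0..1}) g \<and> g x = 0 \<and> g ` (- N) \<subseteq> {1}"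
      using \<open>completely_regular_space euclidean\<close>[unfolded completely_regular_space_def, rule_format, of "-N" x]
      by blast
    then show ?thesis using that by blast
  qed
  have "continuous_map euclidean euclidean g" using g(1) by (simp add: continuous_map_in_subtopology)
  then have cg: "continuous_on UNIV g" by (metis continuous_map_iff_continuous subtopology_UNIV)
  define f where "f = (\<lambda>y. complex_of_real (1 - g y))"
  have sub: "{y. f y \<noteq> 0} \<subseteq> N" using g(3) by (force simp: f_def)
  have cM: "closure {y. f y \<noteq> 0} \<subseteq> M" using sub NM by (meson closure_minimal order_trans)
  have "compact (M \<inter> closure {y. f y \<noteq> 0})" using NM by (simp add: compact_Int_closed)
  moreover have "M \<inter> closure {y. f y \<noteq> 0} = closure {y. f y \<noteq> 0}" using cM by blast
  ultimately have "compact (closure {y. f y \<noteq> 0})" by simp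
  moreover have "continuous_on UNIV f" unfolding f_def by (intro continuous_intros cg)
  ultimately have "f \<in> Cc" by (simp add: Cc_def)
  moreover have "f x = 1" by (simp add: f_def g)
  moreover have "\<And>y. f y \<noteq> 0 \<Longrightarrow> y \<in> V" using sub NM by auto
  ultimately show ?thesis using that by blast
qed



lemma open_vim: "continuous_on UNIV T \<Longrightarrow> open S \<Longrightarrow> open (T -` S)"
  using continuous_on_open_vimage[OF open_UNIV, of T] by simp

lemma closed_vim: "continuous_on UNIV T \<Longrightarrow> closed S \<Longrightarrow> closed (T -` S)"
  using continuous_on_closed_vimage[OF closed_UNIV, of T] by simp

lemma meagre_interior_empty:
  fixes A :: "'a::t2_space set"
  assumes lc: "locally_compact_space (euclidean::'a topology)" and "meagre A"
  shows "interior A = {}"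
proof -
  obtain F :: "nat \<Rightarrow> 'a set" where F: "\<forall>n. nowhere_dense (F n)" "A = (\<Union>n. F n)"
    using assms(2) unfolding meagre_def by blast
  have reg: "regular_space (euclidean :: 'a topology)"
    using lc Hausdorff_euclidean_t2 locally_compact_Hausdorff_imp_regular_space by blast
  have "euclidean interior_of \<Union>(range (\<lambda>n. closure (F n))) = {}"
  proof (rule Baire_category_alt)
    show "completely_metrizable_space (euclidean :: 'a topology) \<or> locally_compact_space (euclidean :: 'a topology) \<and> regular_space (euclidean :: 'a topology)"
      using lc reg by (intro disjI2 conjI)
    show "countable (range (\<lambda>n. closure (F n)))" by simp
    fix S assume "S \<in> range (\<lambda>n. closure (F n))"
    then obtain n where "S = closure (F n)" by blast
    then show "closedin euclidean S \<and> euclidean interior_of S = {}"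
      using F(1) by (simp add: nowhere_dense_def flip: closed_closedin)
  qed
  then have "interior (\<Union>n. closure (F n)) = {}" by simp
  moreover have "A \<subseteq> (\<Union>n. closure (F n))" using F(2) closure_subset by blast
  ultimately show ?thesis using interior_mono by blast
qed

lemma meagre_vimage:
  fixes T :: "'a::t2_space \<Rightarrow> 'a"
  assumes lc: "locally_compact_space (euclidean::'a topology)"
    and contT: "continuous_on UNIV T" and Cm: "meagre (critical_point_set T)" and "meagre M"
  shows "meagre (T -` M)"
proof -
  obtain F :: "nat \<Rightarrow> 'a set" where F: "\<forall>n. nowhere_dense (F n)" "M = (\<Union>n. F n)"
    using assms(4) unfolding meagre_def by blast
  have iC: "interior (critical_point_set T) = {}" using meagre_interior_empty[OF lc Cm] .
  have nd: "nowhere_dense (T -` closure (F n))" for n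
  proof -
    have cl: "closed (T -` closure (F n))" using closed_vim[OF contT] by simp
    show ?thesis unfolding nowhere_dense_def closure_closed[OF cl]
    proof (rule ccontr)
      define U where "U = interior (T -` closure (F n))"
      assume "U \<noteq> {}"
      have oU: "open U" by (simp add: U_def)
      have "\<not> U \<subseteq> critical_point_set T"
      proof
        assume "U \<subseteq> critical_point_set T"
        then have "U \<subseteq> interior (critical_point_set T)" using oU interior_maximal by blast
        then show False using iC \<open>U \<noteq> {}\<close> by blast
      qed
      then obtain x where x: "x \<in> U" "open_at T x" by (auto simp: critical_point_set_def)
      then have "T x \<in> interior (T ` U)" using oU by (simp add: open_at_def interior_open)
      moreover have "T ` U \<subseteq> closure (F n)" using interior_subset[of "T -` closure (F n)"] by (auto simp: U_def)
      ultimately have "T x \<in> interior (closure (F n))" using interior_mono by blast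
      then show False using F(1) by (simp add: nowhere_dense_def)
    qed
  qed
  show ?thesis unfolding meagre_iff
  proof (intro exI conjI)
    show "countable (range (\<lambda>n. T -` closure (F n)))" by simp
    show "\<forall>G\<in>range (\<lambda>n. T -` closure (F n)). nowhere_dense G" using nd by blast
    show "T -` M \<subseteq> \<Union>(range (\<lambda>n. T -` closure (F n)))" using F(2) closure_subset by blast
  qed
qed

lemma meagre_vimage_pow:
  fixes T :: "'a::t2_space \<Rightarrow> 'a"
  assumes lc: "locally_compact_space (euclidean::'a topology)"
    and contT: "continuous_on UNIV T" and Cm: "meagre (critical_point_set T)" and "meagre M"
  shows "meagre ((T ^^ k) -` M)"
proof (induction k)
  case 0 then show ?case using assms(4) by simp
next
  case (Suc k)
  have eq: "(T ^^ Suc k) -` M = T -` ((T ^^ k) -` M)" by (simp only: funpow_Suc_right vimage_comp)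
  show ?case unfolding eq by (rule meagre_vimage[OF lc contT Cm Suc.IH])
qed

lemma compact_cover:
  fixes T :: "'a::{t2_space, second_countable_topology} \<Rightarrow> 'a"
  assumes lc: "locally_compact_space (euclidean::'a topology)" and li: "locally_injective T"
  obtains D :: "'a set" and M U :: "'a \<Rightarrow> 'a set" where "countable D"
    "\<And>x. compact (M x)" "\<And>x. open (U x)" "\<And>x. M x \<subseteq> U x" "\<And>x. inj_on T (U x)"
    "(\<Union>x\<in>D. M x) = UNIV"
proof -
  obtain U where U: "\<And>x. open (U x) \<and> x \<in> U x \<and> inj_on T (U x)"
    using li unfolding locally_injective_def by metis
  have reg: "regular_space (euclidean :: 'a topology)"
    using lc Hausdorff_euclidean_t2 locally_compact_Hausdorff_imp_regular_space by blast
  then have nb: "neighbourhood_base_of (\<lambda>C. compactin euclidean C \<and> closedin euclidean C) (euclidean :: 'a topology)"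
    using lc locally_compact_regular_space_neighbourhood_base by blast
  have "\<forall>x. \<exists>N M. openin euclidean N \<and> (compactin euclidean M \<and> closedin euclidean M) \<and> x \<in> N \<and> N \<subseteq> M \<and> M \<subseteq> U x"
  proof
    fix x show "\<exists>N M. openin euclidean N \<and> (compactin euclidean M \<and> closedin euclidean M) \<and> x \<in> N \<and> N \<subseteq> M \<and> M \<subseteq> U x"
      using nb[unfolded neighbourhood_base_of] U[of x] by simp
  qed
  then obtain N M where NM: "\<And>x. open (N x) \<and> compact (M x) \<and> x \<in> N x \<and> N x \<subseteq> M x \<and> M x \<subseteq> U x"
    by (simp add: flip: closed_closedin) metis
  obtain \<F> where F: "\<F> \<subseteq> range N" "countable \<F>" "\<Union>\<F> = \<Union>(range N)"
    using Lindelof[of "range N"] NM by blast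
  obtain D where D: "countable D" "\<F> = N ` D"
    using countable_subset_image[of \<F> N UNIV] F by blast
  have "(\<Union>x\<in>D. M x) = UNIV"
  proof -
    have "UNIV = \<Union>(range N)" using NM by blast
    also have "\<dots> = (\<Union>x\<in>D. N x)" using F(3) D(2) by simp
    also have "\<dots> \<subseteq> (\<Union>x\<in>D. M x)" using NM by blast
    finally show ?thesis by blast
  qed
  then show ?thesis using that[of D M U] D(1) NM U by blast
qed

lemma meagre_image:
  fixes T :: "'a::{t2_space, second_countable_topology} \<Rightarrow> 'a"
  assumes lc: "locally_compact_space (euclidean::'a topology)"
    and contT: "continuous_on UNIV T" and li: "locally_injective T" and "meagre A"
  shows "meagre (T ` A)"
proof -
  obtain D :: "'a set" and M U :: "'a \<Rightarrow> 'a set" where DMU: "countable D"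
    "\<And>x. compact (M x)" "\<And>x. open (U x)" "\<And>x. M x \<subseteq> U x" "\<And>x. inj_on T (U x)"
    "(\<Union>x\<in>D. M x) = UNIV"
    using compact_cover[OF lc li] by blast
  obtain F :: "nat \<Rightarrow> 'a set" where F: "\<forall>n. nowhere_dense (F n)" "A = (\<Union>n. F n)"
    using assms(4) unfolding meagre_def by blast
  have nd: "nowhere_dense (T ` (M x \<inter> closure (F n)))" for n x
  proof -
    define K where "K = M x \<inter> closure (F n)"
    have cK: "compact K" unfolding K_def using DMU(2) by (simp add: compact_Int_closed)
    have "compact (T ` K)" using compact_continuous_image[OF continuous_on_subset[OF contT] cK] by simp
    then have cl: "closed (T ` K)" by (rule compact_imp_closed)
    show ?thesis unfolding nowhere_dense_def K_def[symmetric] closure_closed[OF cl]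
    proof (rule ccontr)
      assume "interior (T ` K) \<noteq> {}"
      then obtain y where y: "y \<in> interior (T ` K)" by blast
      then obtain k where k: "k \<in> K" "T k = y" using interior_subset by blast
      define Ob where "Ob = T -` interior (T ` K) \<inter> U x"
      have oO: "open Ob" unfolding Ob_def using open_vim[OF contT] DMU(3) by blast
      have kO: "k \<in> Ob" using k y DMU(4) by (auto simp: Ob_def K_def)
      have "Ob \<subseteq> closure (F n)"
      proof
        fix z assume z: "z \<in> Ob"
        then have "T z \<in> T ` K" using interior_subset by (auto simp: Ob_def)
        then obtain k' where k': "k' \<in> K" "T k' = T z" by auto
        have "k' \<in> U x" "z \<in> U x" using k' z DMU(4) by (auto simp: Ob_def K_def)
        then have "z = k'" using k' DMU(5)[of x] by (metis inj_onD)
        then show "z \<in> closure (F n)" using k' by (simp add: K_def)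
      qed
      then have "k \<in> interior (closure (F n))" using oO kO interiorI by blast
      then show False using F(1) by (simp add: nowhere_dense_def)
    qed
  qed
  show ?thesis unfolding meagre_iff
  proof (intro exI conjI)
    show "countable ((\<lambda>(n, x). T ` (M x \<inter> closure (F n))) ` (UNIV \<times> D))"
      using DMU(1) by simp
    show "\<forall>G\<in>(\<lambda>(n, x). T ` (M x \<inter> closure (F n))) ` (UNIV \<times> D). nowhere_dense G" using nd by auto
    show "T ` A \<subseteq> \<Union>((\<lambda>(n, x). T ` (M x \<inter> closure (F n))) ` (UNIV \<times> D))"
    proof
      fix y assume "y \<in> T ` A"
      then obtain a n where a: "a \<in> F n" "y = T a" using F(2) by blast
      obtain x where "x \<in> D" "a \<in> M x" using DMU(6) by blast
      then have "y \<in> T ` (M x \<inter> closure (F n))" using a closure_subset by blast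
      then show "y \<in> \<Union>((\<lambda>(n, x). T ` (M x \<inter> closure (F n))) ` (UNIV \<times> D))"
        using \<open>x \<in> D\<close> by blast
    qed
  qed
qed

lemma meagre_image_pow:
  fixes T :: "'a::{t2_space, second_countable_topology} \<Rightarrow> 'a"
  assumes lc: "locally_compact_space (euclidean::'a topology)"
    and contT: "continuous_on UNIV T" and li: "locally_injective T" and "meagre A"
  shows "meagre ((T ^^ n) ` A)"
proof (induction n)
  case 0 then show ?case using assms(4) by simp
next
  case (Suc n)
  have eq: "(T ^^ Suc n) ` A = T ` ((T ^^ n) ` A)" by (simp add: image_comp)
  show ?case unfolding eq by (rule meagre_image[OF lc contT li Suc.IH])
qed



lemma sep_pair:
  fixes a b :: "'a::t2_space"
  shows "\<exists>P. a \<noteq> b \<longrightarrow> open (fst P) \<and> open (snd P) \<and> a \<in> fst P \<and> b \<in> snd P \<and> fst P \<inter> snd P = {}"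
proof (cases "a = b")
  case True
  show ?thesis by (rule exI[of _ "({}, {})"]) (simp add: True)
next
  case False
  then obtain U W where "open U" "open W" "a \<in> U" "b \<in> W" "U \<inter> W = {}"
    using hausdorff[OF False] by blast
  then show ?thesis by (intro exI[of _ "(U, W)"]) simp
qed

lemma disjoint_nbhds:
  fixes Y :: "'a::t2_space set"
  assumes "finite Y"
  obtains V where "\<And>y. y\<in>Y \<Longrightarrow> open (V y) \<and> y \<in> V y"
    "\<And>y1 y2. y1\<in>Y \<Longrightarrow> y2\<in>Y \<Longrightarrow> y1\<noteq>y2 \<Longrightarrow> V y1 \<inter> V y2 = {}"
proof -
  have "\<forall>ab::'a \<times> 'a. \<exists>P. fst ab \<noteq> snd ab \<longrightarrow> open (fst P) \<and> open (snd P) \<and> fst ab \<in> fst P \<and> snd ab \<in> snd P \<and> fst P \<inter> snd P = {}"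
  proof (rule allI)
    fix ab :: "'a \<times> 'a"
    show "\<exists>P. fst ab \<noteq> snd ab \<longrightarrow> open (fst P) \<and> open (snd P) \<and> fst ab \<in> fst P \<and> snd ab \<in> snd P \<and> fst P \<inter> snd P = {}"
      by (rule sep_pair)
  qed
  from choice[OF this] obtain P0 :: "'a \<times> 'a \<Rightarrow> 'a set \<times> 'a set" where P0: "\<forall>ab. fst ab \<noteq> snd ab \<longrightarrow> open (fst (P0 ab)) \<and> open (snd (P0 ab)) \<and> fst ab \<in> fst (P0 ab) \<and> snd ab \<in> snd (P0 ab) \<and> fst (P0 ab) \<inter> snd (P0 ab) = {}"
    by blast
  define P where "P a b = P0 (a, b)" for a b
  have P: "open (fst (P a b)) \<and> open (snd (P a b)) \<and> a \<in> fst (P a b) \<and> b \<in> snd (P a b) \<and> fst (P a b) \<inter> snd (P a b) = {}"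
    if "a \<noteq> b" for a b
    using P0[rule_format, of "(a, b)"] that unfolding P_def by simp
  define S where "S a b = fst (P a b) \<inter> snd (P b a)" for a b
  define V where "V y = (\<Inter>b\<in>Y - {y}. S y b)" for y
  show ?thesis
  proof (rule that)
    fix y assume "y \<in> Y"
    have "open (V y)" unfolding V_def S_def using assms P by (intro open_INT) auto
    moreover have "y \<in> V y" unfolding V_def S_def
    proof (intro INT_I IntI)
      fix b assume "b \<in> Y - {y}"
      then have yb: "y \<noteq> b" "b \<noteq> y" by auto
      show "y \<in> fst (P y b)" using P[OF yb(1)] by blast
      show "y \<in> snd (P b y)" using P[OF yb(2)] by blast
    qed
    ultimately show "open (V y) \<and> y \<in> V y" by blast
  next
    fix y1 y2 assume y: "y1 \<in> Y" "y2 \<in> Y" "y1 \<noteq> y2"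
    have "V y1 \<subseteq> S y1 y2" "V y2 \<subseteq> S y2 y1" using y unfolding V_def by auto
    moreover have "S y1 y2 \<inter> S y2 y1 = {}" using P[OF y(3)] unfolding S_def by blast
    ultimately show "V y1 \<inter> V y2 = {}" by blast
  qed
qed

lemma transfer_cont:
  fixes T :: "'a::t2_space \<Rightarrow> 'a"
  assumes contT: "continuous_on UNIV T" and li: "locally_injective T" and f: "f \<in> Cc"
    and opn: "\<And>y. T y = x \<Longrightarrow> open_at T y"
  shows "(transfer_op T f \<longlongrightarrow> transfer_op T f x) (at x)"
proof -
  define K where "K = closure {y. f y \<noteq> 0}"
  have cK: "compact K" and cf: "continuous_on UNIV f" using f by (auto simp: Cc_def K_def)
  have fK: "y \<in> K" if "f y \<noteq> 0" for y using closure_subset[of "{y. f y \<noteq> 0}"] that unfolding K_def by blast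
  obtain U0 where U0: "\<And>y. open (U0 y) \<and> y \<in> U0 y \<and> inj_on T (U0 y)"
    using li unfolding locally_injective_def by metis
  define Y where "Y = K \<inter> T -` {x}"
  have TY: "T y = x" if "y \<in> Y" for y using that by (simp add: Y_def)
  have cY: "compact Y" unfolding Y_def using cK closed_vim[OF contT, of "{x}"] by (simp add: compact_Int_closed)
  have finY: "finite Y"
  proof -
    have "Y \<subseteq> (\<Union>y\<in>Y. U0 y)" using U0 by blast
    then obtain Y' where Y': "Y' \<subseteq> Y" "finite Y'" "Y \<subseteq> (\<Union>y\<in>Y'. U0 y)"
      using compactE_image[OF cY, of Y U0] U0 by blast
    have "Y \<subseteq> Y'"
    proof
      fix z assume z: "z \<in> Y"
      then obtain y where y: "y \<in> Y'" "z \<in> U0 y" using Y' by blast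
      have "T z = T y" using z y Y'(1) TY by auto
      moreover have "y \<in> U0 y" "inj_on T (U0 y)" using U0 by auto
      ultimately have "z = y" using y(2) by (metis inj_onD)
      then show "z \<in> Y'" using y by simp
    qed
    then show ?thesis using Y'(2) finite_subset by blast
  qed
  obtain V0 where V0: "\<And>y. y\<in>Y \<Longrightarrow> open (V0 y) \<and> y \<in> V0 y"
    "\<And>y1 y2. y1\<in>Y \<Longrightarrow> y2\<in>Y \<Longrightarrow> y1\<noteq>y2 \<Longrightarrow> V0 y1 \<inter> V0 y2 = {}"
    using disjoint_nbhds[OF finY] by blast
  define V where "V y = V0 y \<inter> U0 y" for y
  have V: "open (V y) \<and> y \<in> V y \<and> inj_on T (V y)" if "y \<in> Y" for y
  proof -
    have "inj_on T (V y)" using U0[of y] inj_on_subset[of T "U0 y" "V y"] by (auto simp: V_def)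
    then show ?thesis using V0(1)[OF that] U0[of y] by (auto simp: V_def)
  qed
  have Vd: "V y1 \<inter> V y2 = {}" if "y1\<in>Y" "y2\<in>Y" "y1\<noteq>y2" for y1 y2
    using V0(2)[OF that] by (auto simp: V_def)
  define h where "h y z = (THE w. w \<in> V y \<and> T w = z)" for y z
  have h: "h y z = w" if "y \<in> Y" "w \<in> V y" "T w = z" for y z w
    unfolding h_def
  proof (rule the_equality)
    show "w \<in> V y \<and> T w = z" using that by simp
    fix w' assume "w' \<in> V y \<and> T w' = z"
    then show "w' = w" using V[OF that(1)] that by (metis inj_onD)
  qed
  have lim1: "((\<lambda>z. h y z) \<longlongrightarrow> y) (at x)" if y: "y \<in> Y" for y
  proof (rule topological_tendstoI)
    fix S assume S: "open S" "y \<in> S"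
    have oS: "open (S \<inter> V y)" "y \<in> S \<inter> V y" using S V[OF y] by auto
    have "y \<in> interior (S \<inter> V y)" using oS interior_open by metis
    then have "T y \<in> interior (T ` (S \<inter> V y))"
      using opn[OF TY[OF y], unfolded open_at_def, rule_format, of "S \<inter> V y"] by blast
    then have xin: "x \<in> interior (T ` (S \<inter> V y))" using TY[OF y] by simp
    have "\<forall>z\<in>interior (T ` (S \<inter> V y)). h y z \<in> S"
    proof
      fix z assume "z \<in> interior (T ` (S \<inter> V y))"
      then obtain w where "w \<in> S \<inter> V y" "T w = z" using interior_subset by blast
      then show "h y z \<in> S" using h[OF y, of w z] by simp
    qed
    then show "eventually (\<lambda>z. h y z \<in> S) (at x)"
      unfolding eventually_at_topological using xin by (intro exI[of _ "interior (T ` (S \<inter> V y))"]) auto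
  qed
  have icf: "isCont f y" for y using cf by (simp add: continuous_on_eq_continuous_at)
  have lim2: "((\<lambda>z. \<Sum>y\<in>Y. f (h y z)) \<longlongrightarrow> (\<Sum>y\<in>Y. f y)) (at x)"
    by (rule tendsto_sum) (rule isCont_tendsto_compose[OF icf lim1])
  have val_x: "transfer_op T f x = (\<Sum>y\<in>Y. f y)"
    unfolding transfer_op_def
  proof (rule sum.mono_neutral_left[OF finY])
    show "{y. T y = x \<and> f y \<noteq> 0} \<subseteq> Y" using fK by (auto simp: Y_def)
    show "\<forall>i\<in>Y - {y. T y = x \<and> f y \<noteq> 0}. f i = 0" using TY by auto
  qed
  have ev: "eventually (\<lambda>z. (\<Sum>y\<in>Y. f (h y z)) = transfer_op T f z) (at x)"
  proof -
    define B where "B = K - (\<Union>y\<in>Y. V y)"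
    define Wset where "Wset = (\<Inter>y\<in>Y. interior (T ` V y)) \<inter> - (T ` B)"
    have "open (\<Union>y\<in>Y. V y)" using V by blast
    then have "compact B" unfolding B_def using cK by (rule compact_diff[rotated])
    then have "compact (T ` B)" using compact_continuous_image[OF continuous_on_subset[OF contT]] by blast
    then have cl: "closed (T ` B)" by (rule compact_imp_closed)
    have oW: "open Wset" unfolding Wset_def using finY cl by (intro open_Int open_INT) auto
    have xW: "x \<in> Wset"
    proof -
      have "x \<in> interior (T ` V y)" if "y \<in> Y" for y
        using opn[OF TY[OF that], unfolded open_at_def, rule_format, of "V y"] V[OF that] TY[OF that] by (simp add: interior_open)
      moreover have "x \<notin> T ` B"
      proof
        assume "x \<in> T ` B"
        then obtain w where "w \<in> B" "T w = x" by blast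
        then have "w \<in> Y" "w \<notin> V w" by (auto simp: B_def Y_def)
        then show False using V by blast
      qed
      ultimately show ?thesis by (simp add: Wset_def)
    qed
    have "(\<Sum>y\<in>Y. f (h y z)) = transfer_op T f z" if z: "z \<in> Wset" for z
    proof -
      have hz: "h y z \<in> V y \<and> T (h y z) = z" if "y \<in> Y" for y
      proof -
        have "z \<in> (\<Inter>y\<in>Y. interior (T ` V y))" using z unfolding Wset_def by (rule IntD1)
        then have "z \<in> interior (T ` V y)" using that by (rule INT_D)
        then have "z \<in> T ` V y" using interior_subset[of "T ` V y"] by (rule subsetD[rotated])
        then obtain w where w: "w \<in> V y" "T w = z" by blast
        have e: "h y z = w" by (rule h[OF that w])
        show ?thesis unfolding e using w by (rule conjI)
      qed
      have inj: "inj_on (\<lambda>y. h y z) Y"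
      proof (rule inj_onI)
        fix y1 y2 assume yy: "y1 \<in> Y" "y2 \<in> Y" "h y1 z = h y2 z"
        show "y1 = y2"
        proof (rule ccontr)
          assume "y1 \<noteq> y2"
          then have "V y1 \<inter> V y2 = {}" using Vd[OF yy(1,2)] by blast
          moreover have "h y1 z \<in> V y1" using hz[OF yy(1)] by (rule conjunct1)
          moreover have "h y1 z \<in> V y2" unfolding yy(3) using hz[OF yy(2)] by (rule conjunct1)
          ultimately show False by blast
        qed
      qed
      have sub: "{w. T w = z \<and> f w \<noteq> 0} \<subseteq> (\<lambda>y. h y z) ` Y"
      proof
        fix w assume w: "w \<in> {w. T w = z \<and> f w \<noteq> 0}"
        then have "w \<in> K" using fK by simp
        moreover have "z \<notin> T ` B" using z by (simp add: Wset_def)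
        ultimately have "w \<in> (\<Union>y\<in>Y. V y)" using w by (auto simp: B_def)
        then obtain y where y: "y \<in> Y" "w \<in> V y" by blast
        have Tw: "T w = z" using w by simp
        have "h y z = w" by (rule h[OF y Tw])
        then show "w \<in> (\<lambda>y. h y z) ` Y" using y(1) by (metis imageI)
      qed
      have "(\<Sum>y\<in>Y. f (h y z)) = (\<Sum>w\<in>(\<lambda>y. h y z) ` Y. f w)" using sum.reindex[OF inj, of f] by simp
      also have "\<dots> = transfer_op T f z" unfolding transfer_op_def
      proof (rule sum.mono_neutral_right)
        show "finite ((\<lambda>y. h y z) ` Y)" using finY by simp
        show "{w. T w = z \<and> f w \<noteq> 0} \<subseteq> (\<lambda>y. h y z) ` Y" by (rule sub)
        show "\<forall>i\<in>(\<lambda>y. h y z) ` Y - {w. T w = z \<and> f w \<noteq> 0}. f i = 0" using hz by auto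
      qed
      finally show ?thesis .
    qed
    then show ?thesis unfolding eventually_at_topological using oW xW by blast
  qed
  show ?thesis using Lim_transform_eventually[OF lim2 ev] val_x by simp
qed

lemma cv_sub:
  fixes T :: "'a::t2_space \<Rightarrow> 'a"
  assumes contT: "continuous_on UNIV T" and li: "locally_injective T"
  shows "critical_value_set T \<subseteq> T ` critical_point_set T"
proof
  fix x assume "x \<in> critical_value_set T"
  then obtain f where f: "f \<in> Cc" "\<not> (transfer_op T f \<longlongrightarrow> transfer_op T f x) (at x)"
    unfolding critical_value_set_def by blast
  show "x \<in> T ` critical_point_set T"
  proof (rule ccontr)
    assume "x \<notin> T ` critical_point_set T"
    then have "\<And>y. T y = x \<Longrightarrow> open_at T y" by (auto simp: critical_point_set_def)
    then show False using transfer_cont[OF contT li f(1)] f(2) by blast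
  qed
qed

lemma crit_to_cv:
  fixes T :: "'a::t2_space \<Rightarrow> 'a"
  assumes lc: "locally_compact_space (euclidean::'a topology)" and li: "locally_injective T"
    and x: "\<not> open_at T x"
  shows "T x \<in> critical_value_set T"
proof -
  obtain U where U: "x \<in> interior U" "T x \<notin> interior (T ` U)" using x unfolding open_at_def by blast
  obtain U0 where U0: "open U0" "x \<in> U0" "inj_on T U0" using li unfolding locally_injective_def by blast
  define V where "V = interior U \<inter> U0"
  have oV: "open V" "x \<in> V" using U U0 by (auto simp: V_def)
  have injV: "inj_on T V" using U0(3) inj_on_subset[of T U0 V] by (auto simp: V_def)
  obtain f where f: "f \<in> Cc" "f x = 1" "\<And>y. f y \<noteq> 0 \<Longrightarrow> y \<in> V" using bump[OF lc oV] by blast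
  have S: "{y. T y = T x \<and> f y \<noteq> 0} = {x}"
  proof
    show "{y. T y = T x \<and> f y \<noteq> 0} \<subseteq> {x}"
    proof
      fix y assume "y \<in> {y. T y = T x \<and> f y \<noteq> 0}"
      then have "T y = T x" "y \<in> V" using f(3) by auto
      then have "y = x" using injV oV(2) by (metis inj_onD)
      then show "y \<in> {x}" by simp
    qed
    show "{x} \<subseteq> {y. T y = T x \<and> f y \<noteq> 0}" using f(2) by simp
  qed
  have val: "transfer_op T f (T x) = 1" unfolding transfer_op_def S using f(2) by simp
  have zero: "transfer_op T f z = 0" if "z \<notin> T ` V" for z
  proof -
    have "{y. T y = z \<and> f y \<noteq> 0} = {}" using that f(3) by blast
    then show ?thesis unfolding transfer_op_def by simp
  qed
  show ?thesis unfolding critical_value_set_def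
  proof (intro CollectI bexI[OF _ f(1)] notI)
    assume "(transfer_op T f \<longlongrightarrow> transfer_op T f (T x)) (at (T x))"
    then have "(transfer_op T f \<longlongrightarrow> 1) (at (T x))" using val by simp
    then have "eventually (\<lambda>z. transfer_op T f z \<noteq> 0) (at (T x))"
      by (rule tendsto_imp_eventually_ne) simp
    then obtain W where W: "open W" "T x \<in> W" "\<forall>z\<in>W. z \<noteq> T x \<longrightarrow> transfer_op T f z \<noteq> 0"
      unfolding eventually_at_topological by auto
    have "W \<subseteq> T ` V"
    proof
      fix z assume "z \<in> W"
      show "z \<in> T ` V"
      proof (cases "z = T x")
        case True then show ?thesis using oV(2) by simp
      next
        case False then show ?thesis using W(3) \<open>z \<in> W\<close> zero by blast
      qed
    qed
    moreover have "T ` V \<subseteq> T ` U" using interior_subset[of U] by (auto simp: V_def)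
    ultimately have "T x \<in> interior (T ` U)" using W(1,2) interiorI by blast
    then show False using U(2) by simp
  qed
qed

theorem corollary4p12:
  fixes T :: "'a::{t2_space, second_countable_topology} \<Rightarrow> 'a"
  assumes "locally_compact_space (euclidean :: 'a topology)"
    and "continuous_on UNIV T"
    and "locally_injective T"
  shows "meagre (saturated_critical_set T) \<longleftrightarrow> meagre (critical_point_set T)"
proof
  assume m: "meagre (saturated_critical_set T)"
  have "critical_point_set T \<subseteq> saturated_critical_set T"
  proof
    fix x assume "x \<in> critical_point_set T"
    then have "T x \<in> critical_value_set T"
      using crit_to_cv[OF assms(1,3)] by (simp add: critical_point_set_def)
    then have "T x \<in> post_critical_set T" unfolding post_critical_set_def
      by (intro UN_I[of 0]) auto
    then have "x \<in> (T ^^ 1) -` post_critical_set T" by simp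
    then show "x \<in> saturated_critical_set T" unfolding saturated_critical_set_def by blast
  qed
  then show "meagre (critical_point_set T)" using meagre_subset m by blast
next
  assume m: "meagre (critical_point_set T)"
  have "meagre (T ` critical_point_set T)" by (rule meagre_image[OF assms m])
  then have cv: "meagre (critical_value_set T)" using meagre_subset cv_sub[OF assms(2,3)] by blast
  have "meagre (post_critical_set T)" unfolding post_critical_set_def
    by (rule meagre_UN) (simp, rule meagre_image_pow[OF assms cv])
  then show "meagre (saturated_critical_set T)" unfolding saturated_critical_set_def
    by (intro meagre_UN) (simp, rule meagre_vimage_pow[OF assms(1,2) m])
qed

end
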